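(* Let $f_0(2)=f_0(3)=1$ and $f_0(n)=0$ for all other $n\ge1$, and let $m\ge1$. For $n>3$ and $1\le k\le n$, $c_m(n,k)$ equals the number of words of length $n-1$ over the alphabet $\{0,1,\ldots,m\}$ with exactly $k-1$ letters equal to $1$, which begin with $0$ and end with $0$, which contain no run of more than $2$ consecutive zeros, and in which all nonzero letters are isolated (no two nonzero letters are adjacent).
   Context: For $m\ge 1$, $f_m$ is the invert transform of $f_{m-1}$, i.e. $f_m(n)=f_{m-1}(n)+\sum_{i=1}^{n-1}f_{m-1}(i)f_m(n-i)$ for $n\ge1$. For $m\ge1$ the numbers $c_m(n,k)$, $0\le k\le n$, are defined by $c_m(0,0)=1$, $c_m(n,0)=0$ for $n\ge1$, and $c_m(n,k)=\sum_{i=1}^{n-k+1}f_{m-1}(i)\,c_m(n-i,k-1)$ for $1\le k\le n$. *)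

theory Defs
  imports Main
begin

text \<open>For m >= 1, f_m is the invert transform of f_{m-1}:
  f_m(n) = f_{m-1}(n) + sum_{i=1}^{n-1} f_{m-1}(i) f_m(n-i) for n >= 1.
  The value at n = 0 is irrelevant and set to 0.\<close>

function ff :: "nat \<Rightarrow> nat \<Rightarrow> nat" where
  "ff 0 n = (if n = 2 \<or> n = 3 then 1 else 0)"
| "ff (Suc m) n =
     (if n = 0 then 0
      else ff m n + (\<Sum>i\<in>{1..n-1}. ff m i * ff (Suc m) (n - i)))"
  by pat_completeness auto
termination
  by (relation "measures [fst, snd]") auto

text \<open>Values with k > n are not used by the paper and are set to 0.\<close>

fun cc :: "nat \<Rightarrow> nat \<Rightarrow> nat \<Rightarrow> nat" where
  "cc m n 0 = (if n = 0 then 1 else 0)"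
| "cc m n (Suc k) =
     (if Suc k \<le> n
      then (\<Sum>i\<in>{1..n - Suc k + 1}. ff (m - 1) i * cc m (n - i) k)
      else 0)"

definition good_words :: "nat \<Rightarrow> nat \<Rightarrow> nat \<Rightarrow> nat list set" where
  "good_words m n k = {w.
      length w = n - 1 \<and>
      set w \<subseteq> {0..m} \<and>
      length (filter (\<lambda>x. x = 1) w) = k - 1 \<and>
      w \<noteq> [] \<and> hd w = 0 \<and> last w = 0 \<and>
      (\<forall>i. i + 2 < length w \<longrightarrow> \<not> (w ! i = 0 \<and> w ! (i+1) = 0 \<and> w ! (i+2) = 0)) \<and>
      (\<forall>i. i + 1 < length w \<longrightarrow> w ! i = 0 \<or> w ! (i+1) = 0)}"

end

theory Submission
  imports Defs "HOL-Computational_Algebra.Formal_Power_Series"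
begin

fun no3 :: "nat list \<Rightarrow> bool" where
  "no3 (a#b#c#w) = (\<not>(a=0 \<and> b=0 \<and> c=0) \<and> no3 (b#c#w))"
| "no3 _ = True"

fun adj :: "nat list \<Rightarrow> bool" where
  "adj (a#b#w) = ((a=0 \<or> b=0) \<and> adj (b#w))"
| "adj _ = True"

lemma all_nat_split: "(\<forall>i::nat. Q i) = (Q 0 \<and> (\<forall>i. Q (Suc i)))"
  by (metis not0_implies_Suc)

lemma no3_iff: "(\<forall>i. i + 2 < length w \<longrightarrow> \<not> (w ! i = 0 \<and> w ! (i+1) = 0 \<and> w ! (i+2) = 0)) = no3 w"
proof (induction w rule: no3.induct)
  case (1 a b c w)
  show ?case
    apply (subst all_nat_split)
    using 1 by simp
next
  case ("2_1") then show ?case by simp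
next
  case ("2_2" v) then show ?case by simp
next
  case ("2_3" v va) then show ?case by simp
qed

lemma adj_iff: "(\<forall>i. i + 1 < length w \<longrightarrow> w ! i = 0 \<or> w ! (i+1) = 0) = adj w"
proof (induction w rule: adj.induct)
  case (1 a b w)
  show ?case
    apply (subst all_nat_split)
    using 1 by simp
qed simp_all

inductive ok :: "nat list \<Rightarrow> bool" where
  ok1: "ok [0]"
| ok2: "ok [0,0]"
| ok3: "c \<noteq> 0 \<Longrightarrow> ok w \<Longrightarrow> ok (0#c#w)"
| ok4: "c \<noteq> 0 \<Longrightarrow> ok w \<Longrightarrow> ok (0#0#c#w)"

definition P :: "nat list \<Rightarrow> bool" where
  "P w = (w \<noteq> [] \<and> hd w = 0 \<and> last w = 0 \<and> no3 w \<and> adj w)"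

lemma no3_nz: "x \<noteq> 0 \<Longrightarrow> no3 (x#w) = no3 w"
  by (cases w rule: no3.cases) auto

lemma adj_0: "adj (0#w) = adj w"
  by (cases w) auto

lemma ok_P: "ok w \<Longrightarrow> P w"
  by (induction rule: ok.induct) (auto simp: P_def no3_nz adj_0 neq_Nil_conv)

lemma P_ok: "P w \<Longrightarrow> ok w"
proof (induction "length w" arbitrary: w rule: less_induct)
  case less
  from less.prems obtain r where w: "w = 0 # r" unfolding P_def by (cases w) auto
  show ?case
  proof (cases r)
    case Nil then show ?thesis using w ok1 by simp
  next
    case (Cons x r')
    show ?thesis
    proof (cases "x = 0")
      case False
      have "r' \<noteq> []" using less.prems w Cons False by (auto simp: P_def)
      then obtain y r'' where r': "r' = y # r''" by (cases r') auto
      have "y = 0" using less.prems w Cons r' False by (auto simp: P_def)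
      have "P r'" using less.prems w Cons r' False \<open>y = 0\<close>
        by (auto simp: P_def no3_nz adj_0)
      then have "ok r'" using less.hyps w Cons by simp
      then show ?thesis using ok3 False w Cons by simp
    next
      case True
      show ?thesis
      proof (cases r')
        case Nil then show ?thesis using w Cons True ok2 by simp
      next
        case (Cons z s)
        have z: "z \<noteq> 0" using less.prems w \<open>r = x # r'\<close> Cons True by (auto simp: P_def)
        have "s \<noteq> []" using less.prems w \<open>r = x # r'\<close> Cons z by (auto simp: P_def)
        then obtain y s' where s: "s = y # s'" by (cases s) auto
        have "y = 0" using less.prems w \<open>r = x # r'\<close> Cons s z by (auto simp: P_def)
        have "P s" using less.prems w \<open>r = x # r'\<close> Cons s z True \<open>y = 0\<close>
          by (auto simp: P_def no3_nz adj_0)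
        then have "ok s" using less.hyps w \<open>r = x # r'\<close> Cons by simp
        then show ?thesis using ok4 z w \<open>r = x # r'\<close> Cons True by simp
      qed
    qed
  qed
qed

definition cnt :: "nat list \<Rightarrow> nat" where
  "cnt w = length (filter (\<lambda>x. x = 1) w)"

definition gw :: "nat \<Rightarrow> nat \<Rightarrow> nat \<Rightarrow> nat list set" where
  "gw m L j = {w. length w = L \<and> set w \<subseteq> {0..m} \<and> cnt w = j \<and> ok w}"

lemma good_gw: "good_words m n k = gw m (n-1) (k-1)"
  unfolding good_words_def gw_def cnt_def no3_iff adj_iff
  using ok_P P_ok unfolding P_def by blast

lemma gw_finite: "finite (gw m L j)"
  by (rule finite_subset[OF _ finite_lists_length_eq[OF finite_atLeastAtMost, of 0 m L]])
     (auto simp: gw_def)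

lemma gw0: "gw m 0 j = {}"
  by (auto simp: gw_def elim: ok.cases)

lemma cnt_Cons [simp]: "cnt (x#w) = (if x = 1 then 1 else 0) + cnt w"
  by (simp add: cnt_def)

lemma cnt_Nil [simp]: "cnt [] = 0"
  by (simp add: cnt_def)

definition AA :: "nat \<Rightarrow> nat \<Rightarrow> nat list set" where
  "AA L j = (if L = 1 \<and> j = 0 then {[0]} else {})"
definition BB :: "nat \<Rightarrow> nat \<Rightarrow> nat list set" where
  "BB L j = (if L = 2 \<and> j = 0 then {[0,0]} else {})"
definition C1 :: "nat \<Rightarrow> nat \<Rightarrow> nat \<Rightarrow> nat list set" where
  "C1 m L j = (if 1 \<le> j then (\<lambda>w. 0#1#w) ` gw m (L-2) (j-1) else {})"
definition C2 :: "nat \<Rightarrow> nat \<Rightarrow> nat \<Rightarrow> nat list set" where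
  "C2 m L j = (\<lambda>(c,w). 0#c#w) ` ({2..m} \<times> gw m (L-2) j)"
definition D1 :: "nat \<Rightarrow> nat \<Rightarrow> nat \<Rightarrow> nat list set" where
  "D1 m L j = (if 1 \<le> j then (\<lambda>w. 0#0#1#w) ` gw m (L-3) (j-1) else {})"
definition D2 :: "nat \<Rightarrow> nat \<Rightarrow> nat \<Rightarrow> nat list set" where
  "D2 m L j = (\<lambda>(c,w). 0#0#c#w) ` ({2..m} \<times> gw m (L-3) j)"

lemma gw_len: "w \<in> gw m L j \<Longrightarrow> length w = L" by (simp add: gw_def)

lemma gw_pos: "w \<in> gw m L j \<Longrightarrow> L \<ge> 1"
  using gw0[of m j] gw_len by (cases L) auto

lemma gw_mem: "v \<in> gw m L j \<Longrightarrow> length v = L \<and> L \<ge> 1 \<and> set v \<subseteq> {0..m} \<and> cnt v = j \<and> ok v"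
  using gw_pos[of v m L j] by (simp add: gw_def)

lemma decomp: assumes m1: "m \<ge> 1" shows "gw m L j = AA L j \<union> BB L j \<union> C1 m L j \<union> C2 m L j \<union> D1 m L j \<union> D2 m L j"
proof
  show "gw m L j \<subseteq> AA L j \<union> BB L j \<union> C1 m L j \<union> C2 m L j \<union> D1 m L j \<union> D2 m L j"
  proof
    fix w assume w: "w \<in> gw m L j"
    then have "ok w" by (simp add: gw_def)
    then show "w \<in> AA L j \<union> BB L j \<union> C1 m L j \<union> C2 m L j \<union> D1 m L j \<union> D2 m L j"
    proof cases
      case ok1 then show ?thesis using w by (auto simp: gw_def AA_def)
    next
      case ok2 then show ?thesis using w by (auto simp: gw_def BB_def)
    next
      case (ok3 c v)
      have v: "v \<in> gw m (L-2) (j - (if c = 1 then 1 else 0))" and cm: "c \<le> m"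
        and j: "j = (if c = 1 then 1 else 0) + cnt v"
        using w ok3 by (auto simp: gw_def)
      show ?thesis
      proof (cases "c = 1")
        case True
        then have "w \<in> C1 m L j" using v j ok3 by (auto simp: C1_def)
        then show ?thesis by blast
      next
        case False
        then have "(c, v) \<in> {2..m} \<times> gw m (L-2) j" using v j cm ok3 by auto
        then have "w \<in> C2 m L j" unfolding C2_def using ok3 by (auto intro!: image_eqI[where x="(c,v)"])
        then show ?thesis by blast
      qed
    next
      case (ok4 c v)
      have v: "v \<in> gw m (L-3) (j - (if c = 1 then 1 else 0))" and cm: "c \<le> m"
        and j: "j = (if c = 1 then 1 else 0) + cnt v"
        using w ok4 by (auto simp: gw_def)
      show ?thesis
      proof (cases "c = 1")
        case True
        then have "w \<in> D1 m L j" using v j ok4 by (auto simp: D1_def)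
        then show ?thesis by blast
      next
        case False
        then have "(c, v) \<in> {2..m} \<times> gw m (L-3) j" using v j cm ok4 by auto
        then have "w \<in> D2 m L j" unfolding D2_def using ok4 by (auto intro!: image_eqI[where x="(c,v)"])
        then show ?thesis by blast
      qed
    qed
  qed
next
  show "AA L j \<union> BB L j \<union> C1 m L j \<union> C2 m L j \<union> D1 m L j \<union> D2 m L j \<subseteq> gw m L j"
  proof (intro Un_least)
    show "AA L j \<subseteq> gw m L j" by (auto simp: AA_def gw_def intro: ok.intros)
    show "BB L j \<subseteq> gw m L j" by (auto simp: BB_def gw_def intro: ok.intros)
    show "C1 m L j \<subseteq> gw m L j"
    proof
      fix w assume "w \<in> C1 m L j"
      then obtain v where j: "1 \<le> j" and v: "v \<in> gw m (L-2) (j-1)" and w: "w = 0#1#v"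
        by (auto simp: C1_def split: if_splits)
      have "ok (0#1#v)" using gw_mem[OF v] by (simp add: ok.intros)
      then show "w \<in> gw m L j" unfolding gw_def using gw_mem[OF v] m1 j w by auto
    qed
    show "C2 m L j \<subseteq> gw m L j"
    proof
      fix w assume "w \<in> C2 m L j"
      then obtain c v where c: "c \<in> {2..m}" and v: "v \<in> gw m (L-2) (j)" and w: "w = 0#c#v"
        by (auto simp: C2_def)
      have "ok (0#c#v)" using gw_mem[OF v] c by (simp add: ok.intros)
      then show "w \<in> gw m L j" unfolding gw_def using gw_mem[OF v] c w by auto
    qed
    show "D1 m L j \<subseteq> gw m L j"
    proof
      fix w assume "w \<in> D1 m L j"
      then obtain v where j: "1 \<le> j" and v: "v \<in> gw m (L-3) (j-1)" and w: "w = 0#0#1#v"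
        by (auto simp: D1_def split: if_splits)
      have "ok (0#0#1#v)" using gw_mem[OF v] by (simp add: ok.intros)
      then show "w \<in> gw m L j" unfolding gw_def using gw_mem[OF v] m1 j w by auto
    qed
    show "D2 m L j \<subseteq> gw m L j"
    proof
      fix w assume "w \<in> D2 m L j"
      then obtain c v where c: "c \<in> {2..m}" and v: "v \<in> gw m (L-3) (j)" and w: "w = 0#0#c#v"
        by (auto simp: D2_def)
      have "ok (0#0#c#v)" using gw_mem[OF v] c by (simp add: ok.intros)
      then show "w \<in> gw m L j" unfolding gw_def using gw_mem[OF v] c w by auto
    qed
  qed
qed

lemma memA: "w \<in> AA L j \<Longrightarrow> w = [0]" by (simp add: AA_def split: if_splits)
lemma memB: "w \<in> BB L j \<Longrightarrow> w = [0,0]" by (simp add: BB_def split: if_splits)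
lemma memC1: "w \<in> C1 m L j \<Longrightarrow> \<exists>v. w = 0#1#v" by (auto simp: C1_def split: if_splits)
lemma memD1: "w \<in> D1 m L j \<Longrightarrow> \<exists>v. w = 0#0#1#v" by (auto simp: D1_def split: if_splits)
lemma memC2: "w \<in> C2 m L j \<Longrightarrow> \<exists>c v. w = 0#c#v \<and> c \<ge> 2" by (auto simp: C2_def)
lemma memD2: "w \<in> D2 m L j \<Longrightarrow> \<exists>c v. w = 0#0#c#v \<and> c \<ge> 2" by (auto simp: D2_def)

lemma disj:
  "AA L j \<inter> BB L j = {}"
  "(AA L j \<union> BB L j) \<inter> C1 m L j = {}"
  "(AA L j \<union> BB L j \<union> C1 m L j) \<inter> C2 m L j = {}"
  "(AA L j \<union> BB L j \<union> C1 m L j \<union> C2 m L j) \<inter> D1 m L j = {}"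
  "(AA L j \<union> BB L j \<union> C1 m L j \<union> C2 m L j \<union> D1 m L j) \<inter> D2 m L j = {}"
  by (fastforce dest!: memA memB memC1 memC2 memD1 memD2)+

lemma card_rec: assumes m1: "m \<ge> 1" shows "card (gw m L j) =
   (if L = 1 \<and> j = 0 then 1 else 0) + (if L = 2 \<and> j = 0 then 1 else 0)
 + (if 1 \<le> j then card (gw m (L-2) (j-1)) else 0) + (m - 1) * card (gw m (L-2) j)
 + (if 1 \<le> j then card (gw m (L-3) (j-1)) else 0) + (m - 1) * card (gw m (L-3) j)"
proof -
  have fin: "finite (AA L j)" "finite (BB L j)" "finite (C1 m L j)" "finite (C2 m L j)"
    "finite (D1 m L j)" "finite (D2 m L j)"
    by (auto simp: AA_def BB_def C1_def C2_def D1_def D2_def gw_finite)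
  have cA: "card (AA L j) = (if L = 1 \<and> j = 0 then 1 else 0)" by (simp add: AA_def)
  have cB: "card (BB L j) = (if L = 2 \<and> j = 0 then 1 else 0)" by (simp add: BB_def)
  have cC1: "card (C1 m L j) = (if 1 \<le> j then card (gw m (L-2) (j-1)) else 0)"
    by (simp add: C1_def card_image inj_on_def)
  have cD1: "card (D1 m L j) = (if 1 \<le> j then card (gw m (L-3) (j-1)) else 0)"
    by (simp add: D1_def card_image inj_on_def)
  have cC2: "card (C2 m L j) = (m - 1) * card (gw m (L-2) j)"
    unfolding C2_def by (subst card_image) (auto simp: inj_on_def card_cartesian_product)
  have cD2: "card (D2 m L j) = (m - 1) * card (gw m (L-3) j)"
    unfolding D2_def by (subst card_image) (auto simp: inj_on_def card_cartesian_product)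
  show ?thesis
    unfolding decomp[OF m1, of L j]
    using fin disj cA cB cC1 cC2 cD1 cD2 by (simp add: card_Un_disjoint)
qed



declare ff.simps(2) [simp del]

definition F0 :: "int fps" where "F0 = fps_X^2 + fps_X^3"
definition FF :: "nat \<Rightarrow> int fps" where "FF m = Abs_fps (\<lambda>n. int (ff m n))"
definition H :: "nat \<Rightarrow> nat \<Rightarrow> int fps" where
  "H m j = Abs_fps (\<lambda>N. if N = 0 then 0 else int (card (gw m (N-1) j)))"

lemma ff_0 [simp]: "ff m 0 = 0"
  by (cases m) (simp_all add: ff.simps)

lemma FF_0: "FF 0 = F0"
  by (rule fps_ext) (simp add: FF_def F0_def)

lemma FF_Suc: "FF (Suc m) = FF m + FF m * FF (Suc m)"
proof (rule fps_ext)
  fix n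
  show "fps_nth (FF (Suc m)) n = fps_nth (FF m + FF m * FF (Suc m)) n"
  proof (cases "n = 0")
    case True then show ?thesis by (simp add: FF_def)
  next
    case False
    have "fps_nth (FF m * FF (Suc m)) n = (\<Sum>i=0..n. int (ff m i) * int (ff (Suc m) (n-i)))"
      by (simp add: fps_mult_nth FF_def)
    also have "\<dots> = (\<Sum>i\<in>{1..n-1}. int (ff m i) * int (ff (Suc m) (n-i)))"
      by (rule sum.mono_neutral_right) (auto simp: not_le)
    finally show ?thesis using False
      by (simp add: FF_def ff.simps(2)[of m n])
  qed
qed

lemma alg:
  fixes A B F c :: "'a::comm_ring_1"
  assumes h: "A = B + B*A" and r: "(1 - c*F)*B = F"
  shows "(1 - (c+1)*F)*A = F"
proof -
  have "(1 - (c+1)*F)*A = (1 - c*F)*A - F*A" by (simp add: algebra_simps)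
  also have "(1 - c*F)*A = (1 - c*F)*(B + B*A)" by (metis h)
  also have "\<dots> = (1 - c*F)*B + ((1 - c*F)*B)*A" by (simp add: algebra_simps)
  also have "\<dots> = F + F*A" using r by simp
  finally show ?thesis by simp
qed

lemma FF_rel: "(1 - fps_const (int m) * F0) * FF m = F0"
proof (induction m)
  case 0 then show ?case by (simp add: FF_0)
next
  case (Suc m)
  have "(1 - (fps_const (int m) + 1) * F0) * FF (Suc m) = F0"
    by (rule alg[OF FF_Suc Suc])
  moreover have "fps_const (int m) + 1 = fps_const (int (Suc m))"
    by (metis fps_const_1_eq_1 fps_const_add of_nat_Suc add.commute)
  ultimately show ?case by simp
qed

lemma FF_nth0 [simp]: "fps_nth (FF m) 0 = 0" by (simp add: FF_def)

lemma pow_low: fixes A :: "int fps" shows "fps_nth A 0 = 0 \<Longrightarrow> j < k \<Longrightarrow> fps_nth (A^k) j = 0"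
proof (induction k arbitrary: j)
  case 0 then show ?case by simp
next
  case (Suc k)
  have "fps_nth (A^Suc k) j = (\<Sum>i=0..j. fps_nth A i * fps_nth (A^k) (j-i))" by (simp add: fps_mult_nth)
  also have "\<dots> = 0"
  proof (rule sum.neutral, rule ballI)
    fix i assume ij: "i \<in> {0..j}"
    show "fps_nth A i * fps_nth (A^k) (j-i) = 0"
    proof (cases "i = 0")
      case True then show ?thesis using Suc.prems by simp
    next
      case False then have "j - i < k" using Suc.prems ij by auto
      then show ?thesis using Suc.IH Suc.prems by simp
    qed
  qed
  finally show ?case .
qed

lemma cc_fps: "int (cc m n k) = fps_nth (FF (m-1) ^ k) n"
proof (induction k arbitrary: n)
  case 0 then show ?case by simp
next
  case (Suc k)
  let ?A = "FF (m-1)"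
  have low: "\<And>j. j < k \<Longrightarrow> fps_nth (?A^k) j = 0" by (rule pow_low) simp
  have rhs: "fps_nth (?A^Suc k) n = (\<Sum>i=0..n. fps_nth ?A i * fps_nth (?A^k) (n-i))"
    by (simp add: fps_mult_nth)
  show ?case
  proof (cases "Suc k \<le> n")
    case True
    have e: "n - Suc k + 1 = n - k" using True by simp
    have "cc m n (Suc k) = (\<Sum>i\<in>{1..n-k}. ff (m-1) i * cc m (n-i) k)"
      using True by (simp only: cc.simps e if_True)
    then have "int (cc m n (Suc k)) = (\<Sum>i\<in>{1..n-k}. int (ff (m-1) i) * int (cc m (n-i) k))"
      by simp
    also have "\<dots> = (\<Sum>i\<in>{1..n-k}. fps_nth ?A i * fps_nth (?A^k) (n-i))"
      by (rule sum.cong) (simp_all add: Suc.IH FF_def)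
    finally have "int (cc m n (Suc k)) = (\<Sum>i\<in>{1..n-k}. fps_nth ?A i * fps_nth (?A^k) (n-i))" .
    also have "\<dots> = (\<Sum>i=0..n. fps_nth ?A i * fps_nth (?A^k) (n-i))"
    proof (rule sum.mono_neutral_left)
      show "\<forall>i\<in>{0..n} - {1..n-k}. fps_nth ?A i * fps_nth (?A^k) (n-i) = 0"
      proof
        fix i assume i: "i \<in> {0..n} - {1..n-k}"
        show "fps_nth ?A i * fps_nth (?A^k) (n-i) = 0"
        proof (cases "i = 0")
          case True then show ?thesis by simp
        next
          case False then have "n - i < k" using i True by auto
          then show ?thesis using low by simp
        qed
      qed
    qed auto
    finally show ?thesis using rhs by simp
  next
    case False
    have "(\<Sum>i=0..n. fps_nth ?A i * fps_nth (?A^k) (n-i)) = 0"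
    proof (rule sum.neutral, rule ballI)
      fix i assume i: "i \<in> {0..n}"
      show "fps_nth ?A i * fps_nth (?A^k) (n-i) = 0"
      proof (cases "i = 0")
        case True then show ?thesis by simp
      next
        case False then have "n - i < k" using i \<open>\<not> Suc k \<le> n\<close> by auto
        then show ?thesis using low by simp
      qed
    qed
    then show ?thesis using rhs False by simp
  qed
qed


lemma hH: "fps_nth (H m j) N = (if N = 0 then 0 else int (card (gw m (N-1) j)))"
  by (simp add: H_def)

lemma Hs1: "fps_nth (H m j) (L-1) = int (card (gw m (L-2) j))"
  by (cases "L \<le> 1") (auto simp: H_def gw0 numeral_2_eq_2)

lemma Hs2: "fps_nth (H m j) (L-2) = int (card (gw m (L-3) j))"
  by (cases "L \<le> 2") (auto simp: H_def gw0)

lemma c2: "fps_nth (F0 * Z) N = (if N < 2 then 0 else fps_nth Z (N-2)) + (if N < 3 then 0 else fps_nth Z (N-3))"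
  by (simp add: F0_def distrib_right fps_X_power_mult_nth)

lemma H_rec:
  assumes m1: "m \<ge> 1"
  shows "H m j = F0 * (if j = 0 then 1 else H m (j-1)) + fps_const (int (m-1)) * (F0 * H m j)"
proof (rule fps_ext)
  fix N
  show "fps_nth (H m j) N = fps_nth (F0 * (if j = 0 then 1 else H m (j-1)) + fps_const (int (m-1)) * (F0 * H m j)) N"
  proof (cases N)
    case 0 then show ?thesis by (simp add: c2 hH F0_def)
  next
    case (Suc L)
    have cr: "int (card (gw m L j)) = int (
   (if L = 1 \<and> j = 0 then 1 else 0) + (if L = 2 \<and> j = 0 then 1 else 0)
 + (if 1 \<le> j then card (gw m (L-2) (j-1)) else 0) + (m - 1) * card (gw m (L-2) j)
 + (if 1 \<le> j then card (gw m (L-3) (j-1)) else 0) + (m - 1) * card (gw m (L-3) j))"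
      using card_rec[OF m1, of L j] by simp
    have g0: "\<And>i. card (gw m 0 i) = 0" by (simp add: gw0)
    let ?Y = "if j = 0 then 1 else H m (j-1)"
    have U1: "(if N < 2 then 0 else fps_nth (H m j) (N-2)) = int (card (gw m (L-2) j))"
      using Suc Hs1[of m j L] by (cases "L = 0") (simp_all add: g0)
    have U2: "(if N < 3 then 0 else fps_nth (H m j) (N-3)) = int (card (gw m (L-3) j))"
      using Suc Hs2[of m j L] by (cases "L \<le> 1") (auto simp: g0)
    have T1: "(if N < 2 then 0 else fps_nth ?Y (N-2)) =
       (if j = 0 then (if L = 1 then 1 else 0) else int (card (gw m (L-2) (j-1))))"
      using Suc Hs1[of m "j-1" L] by (cases "L = 0") (simp_all add: g0)
    have T2: "(if N < 3 then 0 else fps_nth ?Y (N-3)) =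
       (if j = 0 then (if L = 2 then 1 else 0) else int (card (gw m (L-3) (j-1))))"
      using Suc Hs2[of m "j-1" L] by (cases "L \<le> 1") (auto simp: g0)
    have "fps_nth (F0 * ?Y + fps_const (int (m-1)) * (F0 * H m j)) N
       = (if N < 2 then 0 else fps_nth ?Y (N-2)) + (if N < 3 then 0 else fps_nth ?Y (N-3))
         + int (m-1) * ((if N < 2 then 0 else fps_nth (H m j) (N-2)) + (if N < 3 then 0 else fps_nth (H m j) (N-3)))"
      by (simp only: fps_add_nth fps_mult_left_const_nth c2)
    also have "\<dots> = (if j = 0 then (if L = 1 then 1 else 0) else int (card (gw m (L-2) (j-1))))
       + (if j = 0 then (if L = 2 then 1 else 0) else int (card (gw m (L-3) (j-1))))
       + int (m-1) * (int (card (gw m (L-2) j)) + int (card (gw m (L-3) j)))"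
      by (simp only: T1 T2 U1 U2)
    also have "\<dots> = fps_nth (H m j) N"
      using cr Suc by (cases "j = 0") (simp_all add: hH distrib_left ac_simps)
    finally show ?thesis by simp
  qed
qed

lemma alg2:
  fixes H F Y c :: "'a::comm_ring_1"
  assumes h: "H = F*Y + c*(F*H)"
  shows "(1 - c*F)*H = F*Y"
proof -
  have "H - c*(F*H) = F*Y" using h by (metis add_diff_cancel_right')
  then show ?thesis by (simp add: algebra_simps)
qed

lemma H_pow:
  assumes m1: "m \<ge> 1"
  shows "H m j = FF (m-1) ^ Suc j"
proof (induction j)
  let ?D = "1 - fps_const (int (m-1)) * F0"
  have D0: "?D \<noteq> 0"
  proof
    assume "?D = 0"
    then have "fps_nth ?D 0 = 0" by simp
    then show False by (simp add: F0_def)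
  qed
  have DF: "?D * FF (m-1) = F0" by (rule FF_rel)
  {
    case 0
    have "?D * H m 0 = F0 * 1"
      using alg2[OF H_rec[OF m1, of 0]] by simp
    also have "\<dots> = ?D * FF (m-1) ^ Suc 0" using DF by simp
    finally show ?case using D0 by simp
  next
    case (Suc j)
    have "?D * H m (Suc j) = F0 * H m j"
      using alg2[OF H_rec[OF m1, of "Suc j"]] by simp
    also have "\<dots> = (?D * FF (m-1)) * FF (m-1) ^ Suc j" using DF Suc by simp
    also have "\<dots> = ?D * FF (m-1) ^ Suc (Suc j)" by (simp add: mult.assoc)
    finally show ?case using D0 by simp
  }
qed

theorem corollary31:
  fixes m n k :: nat
  assumes "m \<ge> 1" and "n > 3" and "1 \<le> k" and "k \<le> n"
  shows "cc m n k = card (good_words m n k)"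
proof -
  have "int (card (good_words m n k)) = int (card (gw m (n-1) (k-1)))" by (simp add: good_gw)
  also have "\<dots> = fps_nth (H m (k-1)) n" using assms by (simp add: hH)
  also have "\<dots> = fps_nth (FF (m-1) ^ k) n" using assms H_pow[OF assms(1), of "k-1"] by simp
  also have "\<dots> = int (cc m n k)" by (simp add: cc_fps)
  finally show ?thesis by simp
qed

end
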